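(* For every integer $n\ge 0$, $$\Phi^{(1)}[aq^n; b, b'; c; x, y] = \sum_{k=0}^n \sum_{i=0}^k \begin{bmatrix} n \\ k \end{bmatrix} \begin{bmatrix} k \\ i \end{bmatrix} \frac{(b; q)_{k-i} (b'; q)_i}{(c; q)_k} q^{2\binom{k}{2}} a^k x^{k-i} y^i\, \Phi^{(1)}[aq^k; bq^{k-i}, b'q^i; cq^k; xq^i, y]$$ and $$\Phi^{(1)}[aq^{-n}; b, b'; c; x, y] = \sum_{k=0}^n \sum_{i=0}^k \begin{bmatrix} n \\ k \end{bmatrix} \begin{bmatrix} k \\ i \end{bmatrix} \frac{(b; q)_{k-i} (b'; q)_i}{(c; q)_k} q^{\binom{k}{2} - nk} (-a)^k x^{k-i} y^i\, \Phi^{(1)}[a; bq^{k-i}, b'q^i; cq^k; xq^i, y].$$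
   Context: Let $q$ be a complex number with $0<|q|<1$. For complex $z$ and integer $m\ge 0$, $(z;q)_m=\prod_{j=0}^{m-1}(1-zq^j)$, with $(z;q)_0=1$. For integers $0\le k\le n$, $\begin{bmatrix} n \\ k \end{bmatrix}=\frac{(q;q)_n}{(q;q)_k(q;q)_{n-k}}$ is the $q$-binomial coefficient. The $q$-Appell function $\Phi^{(1)}$ is $$\Phi^{(1)}[a; b, b'; c; x, y] = \sum_{m, n \geq 0} \frac{(a; q)_{m+n} (b; q)_m (b'; q)_n}{(q; q)_m (q; q)_n (c; q)_{m+n}} x^m y^n.$$ Identities are understood as identities of power series in $x,y$ (formal, or convergent for small $|x|,|y|$), with complex parameters chosen so that no denominator occurring vanishes. *)

theory Defs
  imports "HOL-Analysis.Analysis"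
begin

definition qpoch :: "complex \<Rightarrow> complex \<Rightarrow> nat \<Rightarrow> complex" where
  "qpoch z q m = (\<Prod>j<m. (1 - z * q ^ j))"

definition qbinom :: "complex \<Rightarrow> nat \<Rightarrow> nat \<Rightarrow> complex" where
  "qbinom q n k = qpoch q q n / (qpoch q q k * qpoch q q (n - k))"

definition qAppell1 ::
  "complex \<Rightarrow> complex \<Rightarrow> complex \<Rightarrow> complex \<Rightarrow> complex \<Rightarrow> complex \<Rightarrow> complex \<Rightarrow> complex" where
  "qAppell1 q a b b' c x y =
     (\<Sum>\<^sub>\<infinity>(m, n) \<in> (UNIV :: (nat \<times> nat) set).
        qpoch a q (m + n) * qpoch b q m * qpoch b' q n
        / (qpoch q q m * qpoch q q n * qpoch c q (m + n)) * x ^ m * y ^ n)"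

end

theory Submission
  imports Defs
begin

lemma qpoch_0[simp]: "qpoch z q 0 = 1" by (simp add: qpoch_def)
lemma qpoch_Suc: "qpoch z q (Suc m) = qpoch z q m * (1 - z * q ^ m)"
  by (simp add: qpoch_def)
lemma qpoch_Suc_shift: "qpoch z q (Suc m) = (1 - z) * qpoch (z * q) q m"
  unfolding qpoch_def by (subst prod.lessThan_Suc_shift) (simp add: mult.assoc)

lemma qpoch_qq_nz: assumes "norm q < 1" shows "qpoch q q m \<noteq> 0"
proof -
  have "q * q ^ j \<noteq> 1" for j
  proof
    assume "q * q ^ j = 1"
    hence "norm (q ^ Suc j) = 1" by simp
    moreover have "norm (q ^ Suc j) < 1" using assms
      by (simp only: norm_power power_less_one_iff norm_ge_zero) simp
    ultimately show False by simp
  qed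
  thus ?thesis unfolding qpoch_def by (simp add: prod_zero_iff)
qed

definition gb :: "complex \<Rightarrow> nat \<Rightarrow> nat \<Rightarrow> complex" where
  "gb q n k = (if k \<le> n then qbinom q n k else 0)"

lemma gb_0: assumes "norm q < 1" shows "gb q n 0 = 1"
  using qpoch_qq_nz[OF assms] by (simp add: gb_def qbinom_def)

lemma gb_nn: assumes "norm q < 1" shows "gb q n n = 1"
  using qpoch_qq_nz[OF assms] by (simp add: gb_def qbinom_def)

lemma gb_big[simp]: "n < k \<Longrightarrow> gb q n k = 0" by (simp add: gb_def)

lemma pascal_field:
  fixes P Qk Qd uk ud t s :: complex
  assumes "Qk \<noteq> 0" "Qd \<noteq> 0" "uk \<noteq> 0" "ud \<noteq> 0"
  shows "P * (s * ud + t * uk) / ((Qk * uk) * (Qd * ud)) = s * (P / ((Qk * uk) * Qd)) + t * (P / (Qk * (Qd * ud)))"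
  using assms by (simp add: field_simps)

lemma pascal_aux:
  assumes "norm q < 1"
  shows "gb q (k+d+2) (k+1) = gb q (k+d+1) (k+1) + q^(d+1) * gb q (k+d+1) k
       \<and> gb q (k+d+2) (k+1) = q^(k+1) * gb q (k+d+1) (k+1) + gb q (k+d+1) k"
proof -
  note nz = qpoch_qq_nz[OF assms]
  have e1: "k+d+2 - (k+1) = Suc d" "k+d+1-(k+1) = d" "k+d+1-k = Suc d" "k+d+2 = Suc (k+d+1)" "k+1 = Suc k" by auto
  have g1: "gb q (k+d+2) (k+1) = qpoch q q (k+d+1) * (1 - q^(k+d+2)) / ((qpoch q q k * (1 - q^(k+1))) * (qpoch q q d * (1 - q^(d+1))))"
    unfolding gb_def qbinom_def by (simp add: e1 qpoch_Suc del: add_2_eq_Suc' add_2_eq_Suc)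
  have g2: "gb q (k+d+1) (k+1) = qpoch q q (k+d+1) / ((qpoch q q k * (1 - q^(k+1))) * qpoch q q d)"
    unfolding gb_def qbinom_def by (simp add: e1 qpoch_Suc del: add_2_eq_Suc' add_2_eq_Suc)
  have g3: "gb q (k+d+1) k = qpoch q q (k+d+1) / (qpoch q q k * (qpoch q q d * (1 - q^(d+1))))"
    unfolding gb_def qbinom_def by (simp add: e1 qpoch_Suc del: add_2_eq_Suc' add_2_eq_Suc)
  have u1: "1 - q^(k+1) \<noteq> 0" and u2: "1 - q^(d+1) \<noteq> 0"
    using nz[of "Suc k"] nz[of "Suc d"] by (auto simp: qpoch_Suc)
  have h1: "1 - q^(k+d+2) = 1 * (1 - q^(d+1)) + q^(d+1) * (1 - q^(k+1))"
       and h2: "1 - q^(k+d+2) = q^(k+1) * (1 - q^(d+1)) + 1 * (1 - q^(k+1))"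
    by (simp_all add: algebra_simps power_add)
  show ?thesis
    unfolding g1 g2 g3
    apply (rule conjI)
     apply (subst h1) apply (subst pascal_field[OF nz nz u1 u2]) apply simp
    apply (subst h2) apply (subst pascal_field[OF nz nz u1 u2]) apply simp
    done
qed

lemma gb_P1: assumes "norm q < 1"
  shows "gb q (Suc n) (Suc k) = gb q n (Suc k) + q^(n-k) * gb q n k"
proof (cases "Suc k \<le> n")
  case True
  then obtain d where n: "n = k + d + 1" by (metis add.commute add_Suc le_Suc_ex Suc_eq_plus1)
  have "n - k = d + 1" using n by simp
  then show ?thesis using pascal_aux[OF assms, of k d] n by (simp add: add.commute add_Suc_right)
next
  case False
  then show ?thesis
  proof (cases "k = n")
    case True thus ?thesis using gb_nn[OF assms] by simp
  qed simp
qed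

lemma gb_P2: assumes "norm q < 1"
  shows "gb q (Suc n) (Suc k) = q^(Suc k) * gb q n (Suc k) + gb q n k"
proof (cases "Suc k \<le> n")
  case True
  then obtain d where n: "n = k + d + 1" by (metis add.commute add_Suc le_Suc_ex Suc_eq_plus1)
  then show ?thesis using pascal_aux[OF assms, of k d, THEN conjunct2] n by (simp add: add.commute add_Suc_right)
next
  case False
  then show ?thesis
  proof (cases "k = n")
    case True thus ?thesis using gb_nn[OF assms] by simp
  qed simp
qed

lemma choose2_Suc: "Suc l choose 2 = (l choose 2) + l"
  by (simp add: numeral_2_eq_2)

definition Zop :: "complex \<Rightarrow> (nat \<Rightarrow> nat \<Rightarrow> complex) \<Rightarrow> (nat \<Rightarrow> nat \<Rightarrow> complex)" where
  "Zop q f = (\<lambda>i j. q^j * f (Suc i) j + f i (Suc j))"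

definition Zp :: "complex \<Rightarrow> nat \<Rightarrow> (nat \<Rightarrow> nat \<Rightarrow> complex) \<Rightarrow> (nat \<Rightarrow> nat \<Rightarrow> complex)" where
  "Zp q k = Zop q ^^ k"

lemma Zp_0[simp]: "Zp q 0 f = f" by (simp add: Zp_def)
lemma Zp_Suc: "Zp q (Suc k) f i j = q^j * Zp q k f (Suc i) j + Zp q k f i (Suc j)"
  by (simp add: Zp_def Zop_def)

lemma zero_choose2[simp]: "(0::nat) choose 2 = 0" by (simp add: numeral_2_eq_2)

lemma sub_lem: "(x::complex) = y + z \<Longrightarrow> y = x + - z" by simp

lemma pw_neg: "(-(a*q))^l = (-a)^l * (q::complex)^l"
  by (metis mult_minus_left power_mult_distrib)

lemma abs1:
  assumes q: "norm q < 1"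
  assumes rec: "\<And>k i j. R (Suc k) i j = R k i j + a * q^k * Zop q (R (Suc k)) i j"
  shows "R n i j = (\<Sum>l\<le>n. gb q n l * (q^(2*(l choose 2)) * a^l) * Zp q l (R l) i j)"
  using rec
proof (induction n arbitrary: a R i j)
  case 0 then show ?case by (simp add: numeral_2_eq_2 gb_0[OF q])
next
  case (Suc n)
  have IH1: "R n i' j' = (\<Sum>l\<le>n. gb q n l * (q^(2*(l choose 2)) * a^l) * Zp q l (R l) i' j')" for i' j'
    using Suc.IH[of R a] Suc.prems by blast
  have rec2: "\<And>k i j. R (Suc (Suc k)) i j = R (Suc k) i j + (a*q) * q^k * Zop q (R (Suc (Suc k))) i j"
    using Suc.prems by (simp add: mult.assoc)
  have IH2: "R (Suc n) i' j' = (\<Sum>l\<le>n. gb q n l * (q^(2*(l choose 2)) * (a*q)^l) * Zp q l (R (Suc l)) i' j')" for i' j'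
    using Suc.IH[of "\<lambda>k. R (Suc k)" "a*q", OF rec2] by simp
  define c where "c l = q^(2*(l choose 2)) * a^l" for l
  define W where "W l = Zp q l (R l) i j" for l
  define g where "g l = gb q n l * (q^(2*(l choose 2)) * (a*q)^l)" for l
  have Z: "Zop q (R (Suc n)) i j = (\<Sum>l\<le>n. g l * W (Suc l))"
  proof -
    have "Zop q (R (Suc n)) i j = q^j * (\<Sum>l\<le>n. g l * Zp q l (R (Suc l)) (Suc i) j) + (\<Sum>l\<le>n. g l * Zp q l (R (Suc l)) i (Suc j))"
      by (simp only: Zop_def IH2 g_def)
    also have "\<dots> = (\<Sum>l\<le>n. g l * W (Suc l))"
      by (simp only: W_def Zp_Suc sum_distrib_left distrib_left sum.distrib mult.left_commute)
    finally show ?thesis .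
  qed
  have e: "a * q^n * g l = q^(n-l) * gb q n l * c (Suc l)" if "l \<le> n" for l
  proof -
    have h1: "q^n = q^(n-l) * q^l" using that by (simp add: power_add[symmetric])
    have ex: "2*((l choose 2)+l) = 2*(l choose 2) + l + l" by simp
    have h2: "q^(2*((l choose 2)+l)) = q^(2*(l choose 2)) * q^l * q^l"
      unfolding ex by (simp only: power_add)
    have h3: "(a*q)^l = a^l * q^l" by (rule power_mult_distrib)
    have "a * q^n * g l = a * (q^(n-l) * q^l) * (gb q n l * (q^(2*(l choose 2)) * (a^l * q^l)))"
      unfolding g_def h1 h3 ..
    also have "\<dots> = q^(n-l) * gb q n l * c (Suc l)"
      unfolding c_def choose2_Suc h2 power_Suc by (simp only: mult_ac)
    finally show ?thesis .
  qed
  have "R (Suc n) i j = R n i j + a * q^n * Zop q (R (Suc n)) i j" using Suc.prems by blast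
  also have "R n i j = (\<Sum>l\<le>Suc n. gb q n l * c l * W l)"
    unfolding IH1 c_def W_def by (simp add: sum.atMost_Suc)
  also have "\<dots> = W 0 + (\<Sum>l\<le>n. gb q n (Suc l) * c (Suc l) * W (Suc l))"
    by (subst sum.atMost_Suc_shift) (simp add: c_def gb_0[OF q])
  also have "a * q^n * Zop q (R (Suc n)) i j = (\<Sum>l\<le>n. q^(n-l) * gb q n l * c (Suc l) * W (Suc l))"
    unfolding Z sum_distrib_left
  proof (intro sum.cong refl)
    fix l assume "l \<in> {..n}"
    then have "a * q^n * g l = q^(n-l) * gb q n l * c (Suc l)" using e by simp
    then show "a * q^n * (g l * W (Suc l)) = q^(n-l) * gb q n l * c (Suc l) * W (Suc l)"
      by (simp only: mult.assoc[symmetric])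
  qed
  also have "W 0 + (\<Sum>l\<le>n. gb q n (Suc l) * c (Suc l) * W (Suc l)) + (\<Sum>l\<le>n. q^(n-l) * gb q n l * c (Suc l) * W (Suc l))
      = W 0 + (\<Sum>l\<le>n. gb q (Suc n) (Suc l) * c (Suc l) * W (Suc l))"
    by (simp only: gb_P1[OF q] distrib_right sum.distrib add.assoc)
  also have "\<dots> = (\<Sum>l\<le>Suc n. gb q (Suc n) l * c l * W l)"
    by (subst sum.atMost_Suc_shift) (simp add: c_def gb_0[OF q])
  finally show ?case unfolding c_def W_def .
qed

lemma abs2:
  assumes q: "norm q < 1"
  assumes rec: "\<And>k i j. R (Suc k) i j = R k i j + a * q^k * Zop q (R (Suc k)) i j"
  shows "R 0 i j = (\<Sum>l\<le>n. gb q n l * (q^(l choose 2) * (-a)^l) * Zp q l (R n) i j)"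
  using rec
proof (induction n arbitrary: a R i j)
  case 0 then show ?case by (simp add: numeral_2_eq_2 gb_0[OF q])
next
  case (Suc n)
  have rec2: "\<And>k i j. R (Suc (Suc k)) i j = R (Suc k) i j + (a*q) * q^k * Zop q (R (Suc (Suc k))) i j"
    using Suc.prems by (simp add: mult.assoc)
  have IH: "R (Suc 0) i' j' = (\<Sum>l\<le>n. gb q n l * (q^(l choose 2) * (-(a*q))^l) * Zp q l (R (Suc n)) i' j')" for i' j'
    using Suc.IH[of "\<lambda>k. R (Suc k)" "a*q", OF rec2] by simp
  define W where "W l = Zp q l (R (Suc n)) i j" for l
  define g where "g l = gb q n l * (q^(l choose 2) * (-(a*q))^l)" for l
  define X where "X l = q^(l choose 2) * (-a)^l" for l
  have Z: "Zop q (R (Suc 0)) i j = (\<Sum>l\<le>n. g l * W (Suc l))"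
  proof -
    have "Zop q (R (Suc 0)) i j = q^j * (\<Sum>l\<le>n. g l * Zp q l (R (Suc n)) (Suc i) j) + (\<Sum>l\<le>n. g l * Zp q l (R (Suc n)) i (Suc j))"
      by (simp only: Zop_def IH g_def)
    also have "\<dots> = (\<Sum>l\<le>n. g l * W (Suc l))"
      by (simp only: W_def Zp_Suc sum_distrib_left distrib_left sum.distrib mult.left_commute)
    finally show ?thesis .
  qed
  have h: "R (Suc 0) i j = R 0 i j + a * Zop q (R (Suc 0)) i j"
    using Suc.prems[of 0 i j] by (simp only: power_0 mult_1_right)
  have "R 0 i j = R (Suc 0) i j + (- (a * Zop q (R (Suc 0)) i j))" by (rule sub_lem[OF h])
  also have "R (Suc 0) i j = (\<Sum>l\<le>Suc n. q^l * gb q n l * X l * W l)"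
  proof -
    have "R (Suc 0) i j = (\<Sum>l\<le>n. q^l * gb q n l * X l * W l)"
      unfolding IH W_def X_def by (intro sum.cong refl) (simp add: pw_neg mult_ac)
    then show ?thesis by (simp add: sum.atMost_Suc)
  qed
  also have "\<dots> = W 0 + (\<Sum>l\<le>n. q^(Suc l) * gb q n (Suc l) * X (Suc l) * W (Suc l))"
    by (subst sum.atMost_Suc_shift) (simp add: X_def gb_0[OF q])
  also have "- (a * Zop q (R (Suc 0)) i j) = (\<Sum>l\<le>n. gb q n l * X (Suc l) * W (Suc l))"
    unfolding Z sum_distrib_left sum_negf[symmetric]
  proof (intro sum.cong refl)
    fix l
    show "- (a * (g l * W (Suc l))) = gb q n l * X (Suc l) * W (Suc l)"
      unfolding g_def X_def pw_neg choose2_Suc by (simp add: power_add mult_ac)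
  qed
  also have "W 0 + (\<Sum>l\<le>n. q^(Suc l) * gb q n (Suc l) * X (Suc l) * W (Suc l)) + (\<Sum>l\<le>n. gb q n l * X (Suc l) * W (Suc l))
     = W 0 + (\<Sum>l\<le>n. gb q (Suc n) (Suc l) * X (Suc l) * W (Suc l))"
    by (simp only: gb_P2[OF q] distrib_right sum.distrib add.assoc)
  also have "\<dots> = (\<Sum>l\<le>Suc n. gb q (Suc n) l * X l * W l)"
    by (subst sum.atMost_Suc_shift) (simp add: X_def gb_0[OF q])
  finally show ?case unfolding X_def W_def .
qed

lemma Zp_explicit:
  assumes q: "norm q < 1"
  shows "Zp q k f i j = (\<Sum>l\<le>k. gb q k l * q^(j*(k-l)) * f (i+(k-l)) (j+l))"
proof (induction k arbitrary: i j)
  case 0 then show ?case by (simp add: gb_0[OF q])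
next
  case (Suc k)
  define F where "F l = f (i+(k-l)) (j + Suc l)" for l
  have A: "q^j * Zp q k f (Suc i) j = (\<Sum>l\<le>Suc k. gb q k l * q^(j*(Suc k-l)) * f (i+(Suc k-l)) (j+l))"
  proof -
    have "q^j * Zp q k f (Suc i) j = (\<Sum>l\<le>k. gb q k l * q^(j*(Suc k-l)) * f (i+(Suc k-l)) (j+l))"
      unfolding Suc.IH sum_distrib_left
    proof (intro sum.cong refl)
      fix l assume "l \<in> {..k}"
      hence l: "l \<le> k" by simp
      have "q^j * q^(j*(k-l)) = q^(j*(Suc k - l))"
        using l by (simp add: Suc_diff_le power_add[symmetric])
      moreover have "Suc i + (k - l) = i + (Suc k - l)" using l by simp
      ultimately show "q^j * (gb q k l * q^(j*(k-l)) * f (Suc i + (k-l)) (j+l)) = gb q k l * q^(j*(Suc k-l)) * f (i+(Suc k-l)) (j+l)"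
        by (metis (no_types, lifting) mult.assoc mult.left_commute)
    qed
    then show ?thesis by (simp add: sum.atMost_Suc)
  qed
  also have "\<dots> = q^(j * Suc k) * f (i + Suc k) j + (\<Sum>l\<le>k. gb q k (Suc l) * q^(j*(k-l)) * F l)"
    by (subst sum.atMost_Suc_shift) (simp add: F_def gb_0[OF q])
  finally have A': "q^j * Zp q k f (Suc i) j = q^(j * Suc k) * f (i + Suc k) j + (\<Sum>l\<le>k. gb q k (Suc l) * q^(j*(k-l)) * F l)" .
  have B: "Zp q k f i (Suc j) = (\<Sum>l\<le>k. q^(k-l) * gb q k l * q^(j*(k-l)) * F l)"
    unfolding Suc.IH F_def
  proof (intro sum.cong refl)
    fix l
    have "q^(Suc j * (k-l)) = q^(k-l) * q^(j*(k-l))" by (simp only: mult_Suc power_add)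
    moreover have "Suc j + l = j + Suc l" by simp
    ultimately show "gb q k l * q^(Suc j * (k-l)) * f (i + (k-l)) (Suc j + l) = q^(k-l) * gb q k l * q^(j*(k-l)) * f (i+(k-l)) (j + Suc l)"
      by (simp only: mult_ac)
  qed
  have "Zp q (Suc k) f i j = q^(j * Suc k) * f (i + Suc k) j + (\<Sum>l\<le>k. gb q (Suc k) (Suc l) * q^(j*(k-l)) * F l)"
    unfolding Zp_Suc A' B by (simp only: gb_P1[OF q] distrib_right sum.distrib add.assoc)
  also have "\<dots> = (\<Sum>l\<le>Suc k. gb q (Suc k) l * q^(j*(Suc k-l)) * f (i+(Suc k-l)) (j+l))"
    by (subst sum.atMost_Suc_shift) (simp add: F_def gb_0[OF q])
  finally show ?case .
qed

definition tm :: "complex \<Rightarrow> complex \<Rightarrow> complex \<Rightarrow> complex \<Rightarrow> complex \<Rightarrow> complex \<Rightarrow> complex \<Rightarrow> nat \<times> nat \<Rightarrow> complex" where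
  "tm q a b b' c x y = (\<lambda>(m, n). qpoch a q (m + n) * qpoch b q m * qpoch b' q n
        / (qpoch q q m * qpoch q q n * qpoch c q (m + n)) * x ^ m * y ^ n)"

lemma qAppell1_tm: "qAppell1 q a b b' c x y = infsum (tm q a b b' c x y) UNIV"
  unfolding qAppell1_def tm_def ..

lemma qpoch_upper: assumes "norm q \<le> 1" shows "norm (qpoch z q N) \<le> (1 + norm z)^N"
proof -
  have "norm (qpoch z q N) \<le> (\<Prod>j<N. norm (1 - z * q^j))"
    unfolding qpoch_def by (rule norm_prod_le)
  also have "\<dots> \<le> (\<Prod>j<N. 1 + norm z)"
  proof (rule prod_mono, safe)
    fix j
    have "norm q ^ j \<le> 1" by (rule power_le_one) (use assms in auto)
    then have "norm z * norm q ^ j \<le> norm z" by (simp add: mult_left_le)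
    then have "norm (z * q^j) \<le> norm z" by (simp add: norm_mult norm_power)
    then show "norm (1 - z * q^j) \<le> 1 + norm z"
      by (smt (verit) norm_one norm_triangle_ineq4)
  qed simp
  finally show ?thesis by simp
qed

lemma qpoch_lower:
  assumes "0 \<le> d" "\<And>j. d \<le> norm (1 - z * q^j)"
  shows "d ^ N \<le> norm (qpoch z q N)"
proof -
  have "d ^ N = (\<Prod>j<N. d)" by simp
  also have "\<dots> \<le> (\<Prod>j<N. norm (1 - z * q^j))"
    by (rule prod_mono) (use assms in auto)
  also have "\<dots> = norm (qpoch z q N)" unfolding qpoch_def by (rule prod_norm)
  finally show ?thesis .
qed

lemma qq_lower: fixes q :: complex assumes "norm q < 1" shows "1 - norm q \<le> norm (1 - q * q^j)"
proof -
  have "norm q ^ j \<le> 1" by (rule power_le_one) (use assms in auto)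
  then have "norm q * norm q ^ j \<le> norm q" by (simp add: mult_left_le)
  then have "norm (q * q^j) \<le> norm q" by (simp add: norm_mult norm_power)
  then show ?thesis by (smt (verit) norm_one norm_triangle_ineq2)
qed

definition Kb :: "complex \<Rightarrow> real \<Rightarrow> complex \<Rightarrow> complex \<Rightarrow> complex \<Rightarrow> real" where
  "Kb q d a b b' = (1 + norm a) * (1 + norm b) * (1 + norm b') / ((1 - norm q) * d)"

lemma tm_bound:
  assumes q: "norm q < 1" and d: "0 < d" "\<And>j. d \<le> norm (1 - c * q^j)"
    and K: "Kb q d a b b' \<le> K"
  shows "norm (tm q a b b' c x y (m, n)) \<le> (K * norm x)^m * (K * norm y)^n"
proof -
  define P where "P = 1 + norm a"
  define B1 where "B1 = 1 + norm b"
  define B2 where "B2 = 1 + norm b'"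
  define D where "D = (1 - norm q) * d"
  have P1: "1 \<le> P" "1 \<le> B1" "1 \<le> B2" unfolding P_def B1_def B2_def by auto
  have D0: "0 < D" unfolding D_def using q d by simp
  have num: "norm (qpoch a q (m + n) * qpoch b q m * qpoch b' q n) \<le> P^(m+n) * B1^(m+n) * B2^(m+n)"
  proof -
    have "norm (qpoch a q (m + n) * qpoch b q m * qpoch b' q n) \<le> P^(m+n) * B1^m * B2^n"
      unfolding norm_mult P_def B1_def B2_def
      by (intro mult_mono qpoch_upper) (use q in auto)
    also have "\<dots> \<le> P^(m+n) * B1^(m+n) * B2^(m+n)"
      using P1 by (intro mult_mono power_increasing) auto
    finally show ?thesis .
  qed
  have den: "D^(m+n) \<le> norm (qpoch q q m * qpoch q q n * qpoch c q (m + n))"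
  proof -
    have "D^(m+n) = (1 - norm q)^m * (1 - norm q)^n * d^(m+n)"
      unfolding D_def by (simp add: power_mult_distrib power_add)
    also have "\<dots> \<le> norm (qpoch q q m) * norm (qpoch q q n) * norm (qpoch c q (m + n))"
      using q d by (intro mult_mono qpoch_lower qq_lower) auto
    finally show ?thesis by (simp add: norm_mult)
  qed
  have "norm (tm q a b b' c x y (m, n)) =
      norm (qpoch a q (m + n) * qpoch b q m * qpoch b' q n) / norm (qpoch q q m * qpoch q q n * qpoch c q (m + n))
      * norm x ^ m * norm y ^ n"
    unfolding tm_def by (simp add: norm_mult norm_divide norm_power)
  also have "\<dots> \<le> (P^(m+n) * B1^(m+n) * B2^(m+n)) / D^(m+n) * norm x ^ m * norm y ^ n"
    using num den D0 P1
    by (intro mult_right_mono frac_le) auto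
  also have "(P^(m+n) * B1^(m+n) * B2^(m+n)) / D^(m+n) = Kb q d a b b' ^ (m+n)"
    unfolding Kb_def P_def B1_def B2_def D_def by (simp add: power_divide power_mult_distrib)
  also have "Kb q d a b b' ^ (m+n) * norm x ^ m * norm y ^ n \<le> K^(m+n) * norm x ^ m * norm y ^ n"
    using K D0 P1 unfolding Kb_def D_def
    by (intro mult_right_mono power_mono) (auto simp: P_def B1_def B2_def)
  also have "\<dots> = (K * norm x)^m * (K * norm y)^n"
    by (simp add: power_add power_mult_distrib)
  finally show ?thesis .
qed

lemma geom2_summable:
  fixes u v :: real
  assumes "0 \<le> u" "u < 1" "0 \<le> v" "v < 1"
  shows "(\<lambda>(m, n). u^m * v^n) summable_on UNIV"
proof -
  have gs: "(\<lambda>n. v^n) sums (1 / (1 - v))" using assms by (intro geometric_sums) simp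
  have in1: "((\<lambda>n. u^m * v^n) has_sum (u^m * (1 / (1 - v)))) UNIV" for m
  proof (rule sums_nonneg_imp_has_sum)
    show "(\<lambda>n. u^m * v^n) sums (u^m * (1 / (1 - v)))" by (rule sums_mult[OF gs])
  qed (use assms in auto)
  have out: "(\<lambda>m. u^m * (1 / (1 - v))) summable_on UNIV"
    by (subst summable_on_UNIV_nonneg_real_iff) (use assms in \<open>auto intro!: summable_mult2 summable_geometric\<close>)
  have "(\<lambda>(m, n). u^m * v^n) summable_on Sigma UNIV (\<lambda>_. UNIV)"
  proof (rule summable_on_SigmaI[where g="\<lambda>m. u^m * (1 / (1 - v))"])
    show "((\<lambda>y. case (m, y) of (m, n) \<Rightarrow> u^m * v^n) has_sum u^m * (1 / (1 - v))) UNIV" for m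
      using in1[of m] by simp
  qed (use assms out in auto)
  then show ?thesis by simp
qed

lemma tm_summable:
  assumes q: "norm q < 1" and d: "0 < d" "\<And>j. d \<le> norm (1 - c * q^j)"
    and K: "Kb q d a b b' \<le> K" and x: "norm x * K < 1" and y: "norm y * K < 1"
  shows "tm q a b b' c x y summable_on UNIV"
proof -
  have K0: "0 \<le> K"
    using K q d unfolding Kb_def by (smt (verit) divide_nonneg_pos mult_pos_pos norm_ge_zero mult_nonneg_nonneg)
  define G where "G = (\<lambda>(m::nat, n::nat). (K * norm x)^m * (K * norm y)^n)"
  have g: "G summable_on UNIV"
    unfolding G_def using x y K0 by (intro geom2_summable) (auto simp: mult.commute)
  have "(\<lambda>p. norm (G p)) summable_on UNIV"
  proof -
    have "(\<lambda>p. norm (G p)) = G" using K0 by (auto simp: G_def fun_eq_iff)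
    then show ?thesis using g by simp
  qed
  then have "(\<lambda>p. norm (tm q a b b' c x y p)) summable_on UNIV"
  proof (rule Infinite_Sum.abs_summable_on_comparison_test)
    fix p :: "nat \<times> nat"
    obtain m n where p: "p = (m, n)" by (cases p)
    show "norm (tm q a b b' c x y p) \<le> norm (G p)"
      using tm_bound[OF q d K, of x y m n] K0 by (simp add: p G_def)
  qed
  then show ?thesis by (rule Infinite_Sum.abs_summable_summable)
qed

lemma shift1:
  fixes f :: "nat \<times> nat \<Rightarrow> complex"
  assumes "\<And>n. f (0, n) = 0"
  shows "infsum f UNIV = infsum (\<lambda>(m, n). f (Suc m, n)) UNIV"
    and "f summable_on UNIV \<longleftrightarrow> (\<lambda>(m, n). f (Suc m, n)) summable_on UNIV"
proof -
  define h where "h = (\<lambda>(m::nat, n::nat). (Suc m, n))"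
  have inj: "inj h" unfolding h_def by (auto simp: inj_def)
  have comp: "f \<circ> h = (\<lambda>(m, n). f (Suc m, n))" unfolding h_def by (auto simp: fun_eq_iff)
  have z: "f p = 0" if "p \<in> UNIV - range h" for p
  proof -
    obtain m n where p: "p = (m, n)" by (cases p)
    have "m = 0"
    proof (rule ccontr)
      assume "m \<noteq> 0"
      then obtain m' where "m = Suc m'" by (cases m) auto
      then have "p \<in> range h" unfolding p h_def by auto
      then show False using that by simp
    qed
    then show ?thesis using assms p by simp
  qed
  have "infsum f UNIV = infsum f (range h)"
    by (rule infsum_cong_neutral) (use z in auto)
  also have "\<dots> = infsum (f \<circ> h) UNIV" by (rule infsum_reindex[OF inj])
  finally show "infsum f UNIV = infsum (\<lambda>(m, n). f (Suc m, n)) UNIV" unfolding comp .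
  have "f summable_on UNIV \<longleftrightarrow> f summable_on (range h)"
    by (rule summable_on_cong_neutral) (use z in auto)
  also have "\<dots> \<longleftrightarrow> (f \<circ> h) summable_on UNIV" by (rule summable_on_reindex[OF inj])
  finally show "f summable_on UNIV \<longleftrightarrow> (\<lambda>(m, n). f (Suc m, n)) summable_on UNIV" unfolding comp .
qed

lemma shift2:
  fixes f :: "nat \<times> nat \<Rightarrow> complex"
  assumes "\<And>m. f (m, 0) = 0"
  shows "infsum f UNIV = infsum (\<lambda>(m, n). f (m, Suc n)) UNIV"
    and "f summable_on UNIV \<longleftrightarrow> (\<lambda>(m, n). f (m, Suc n)) summable_on UNIV"
proof -
  define h where "h = (\<lambda>(m::nat, n::nat). (m, Suc n))"
  have inj: "inj h" unfolding h_def by (auto simp: inj_def)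
  have comp: "f \<circ> h = (\<lambda>(m, n). f (m, Suc n))" unfolding h_def by (auto simp: fun_eq_iff)
  have z: "f p = 0" if "p \<in> UNIV - range h" for p
  proof -
    obtain m n where p: "p = (m, n)" by (cases p)
    have "n = 0"
    proof (rule ccontr)
      assume "n \<noteq> 0"
      then obtain n' where "n = Suc n'" by (cases n) auto
      then have "p \<in> range h" unfolding p h_def by auto
      then show False using that by simp
    qed
    then show ?thesis using assms p by simp
  qed
  have "infsum f UNIV = infsum f (range h)"
    by (rule infsum_cong_neutral) (use z in auto)
  also have "\<dots> = infsum (f \<circ> h) UNIV" by (rule infsum_reindex[OF inj])
  finally show "infsum f UNIV = infsum (\<lambda>(m, n). f (m, Suc n)) UNIV" unfolding comp .
  have "f summable_on UNIV \<longleftrightarrow> f summable_on (range h)"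
    by (rule summable_on_cong_neutral) (use z in auto)
  also have "\<dots> \<longleftrightarrow> (f \<circ> h) summable_on UNIV" by (rule summable_on_reindex[OF inj])
  finally show "f summable_on UNIV \<longleftrightarrow> (\<lambda>(m, n). f (m, Suc n)) summable_on UNIV" unfolding comp .
qed

lemma qpoch_aq: "qpoch (a*q) q N = qpoch a q N + a * (1 - q^N) * qpoch (a*q) q (N - 1)"
proof (cases N)
  case 0 then show ?thesis by simp
next
  case (Suc M)
  have "qpoch (a*q) q (Suc M) = qpoch (a*q) q M * (1 - a*q*q^M)" by (rule qpoch_Suc)
  moreover have "qpoch a q (Suc M) = (1 - a) * qpoch (a*q) q M" by (rule qpoch_Suc_shift)
  ultimately show ?thesis using Suc by (simp add: algebra_simps)
qed

lemma Kb_mono: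
  assumes "norm q < 1" "0 < d" "norm a' \<le> norm a" "norm b1 \<le> norm b" "norm b2 \<le> norm b'"
  shows "Kb q d a' b1 b2 \<le> Kb q d a b b'"
  unfolding Kb_def using assms
  by (intro divide_right_mono mult_mono) auto

lemma norm_mult_q: fixes q z :: complex assumes "norm q < 1" shows "norm (z * q) \<le> norm z"
proof -
  have "norm z * norm q \<le> norm z" using assms by (simp add: mult_left_le)
  then show ?thesis by (simp add: norm_mult)
qed

lemma qpoch_nz: assumes "\<And>j. C * q^j \<noteq> 1" shows "qpoch C q N \<noteq> 0"
  unfolding qpoch_def using assms by (auto simp: prod_zero_iff)

lemma fld1:
  fixes a Q P b1 Bq Bn qm qn c1 Cq x xm yn :: complex
  assumes "Q \<noteq> 0" "c1 \<noteq> 0" "qm \<noteq> 0" "qn \<noteq> 0" "Cq \<noteq> 0"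
  shows "a * Q * P * (b1 * Bq) * Bn / (qm * Q * qn * (c1 * Cq)) * (x * xm) * yn
       = a * x * b1 / c1 * (P * Bq * Bn / (qm * qn * Cq) * xm * yn)"
  using assms by (simp add: field_simps)

lemma fld2:
  fixes a Q P b1 Bq Bm qm qn c1 Cq x xm yn qm' y :: complex
  assumes "Q \<noteq> 0" "c1 \<noteq> 0" "qm \<noteq> 0" "qn \<noteq> 0" "Cq \<noteq> 0"
  shows "a * qm' * Q * P * Bm * (b1 * Bq) / (qm * (qn * Q) * (c1 * Cq)) * xm * (y * yn)
       = a * y * b1 / c1 * (P * Bm * Bq / (qm * qn * Cq) * (xm * qm') * yn)"
  using assms by (simp add: field_simps)

lemma qA_rec:
  fixes q a B B' C x y :: complex
  assumes q: "norm q < 1" and d: "0 < d" "\<And>j. d \<le> norm (1 - C * q^j)"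
    and K: "Kb q d a B B' \<le> K" and x: "norm x * K < 1" and y: "norm y * K < 1"
  shows "qAppell1 q (a*q) B B' C x y = qAppell1 q a B B' C x y
          + a*x*(1-B)/(1-C) * qAppell1 q (a*q) (B*q) B' (C*q) x y
          + a*y*(1-B')/(1-C) * qAppell1 q (a*q) B (B'*q) (C*q) (x*q) y"
proof -
  have K0: "0 \<le> K"
    using K q d unfolding Kb_def by (smt (verit) divide_nonneg_pos mult_pos_pos norm_ge_zero mult_nonneg_nonneg)
  have dq: "d \<le> norm (1 - C * q * q^j)" for j using d(2)[of "Suc j"] by (simp add: mult.assoc)
  have Cnz: "C * q^j \<noteq> 1" for j using d(1) d(2)[of j] by auto
  have Cqnz: "C * q * q^j \<noteq> 1" for j using Cnz[of "Suc j"] by (simp add: mult.assoc)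
  have C1: "1 - C \<noteq> 0" using Cnz[of 0] by simp
  have nqq: "norm (a*q) \<le> norm a" "norm (B*q) \<le> norm B" "norm (B'*q) \<le> norm B'" "norm (x*q) \<le> norm x"
    using norm_mult_q[OF q] by auto
  have K1: "Kb q d (a*q) B B' \<le> K" using order_trans[OF Kb_mono[OF q d(1) nqq(1)] K] by simp
  have K2: "Kb q d (a*q) (B*q) B' \<le> K" using order_trans[OF Kb_mono[OF q d(1) nqq(1) nqq(2)] K] by simp
  have K3: "Kb q d (a*q) B (B'*q) \<le> K" using order_trans[OF Kb_mono[OF q d(1) nqq(1) _ nqq(3)] K] by simp
  have xq: "norm (x*q) * K < 1" using mult_right_mono[OF nqq(4) K0] x by simp
  define S0 where "S0 = tm q a B B' C x y"
  define S1 where "S1 = tm q (a*q) B B' C x y"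
  define G1 where "G1 = tm q (a*q) (B*q) B' (C*q) x y"
  define G2 where "G2 = tm q (a*q) B (B'*q) (C*q) (x*q) y"
  have sS0: "S0 summable_on UNIV" unfolding S0_def by (rule tm_summable[OF q d K x y])
  have sG1: "G1 summable_on UNIV" unfolding G1_def by (rule tm_summable[OF q d(1) dq K2 x y])
  have sG2: "G2 summable_on UNIV" unfolding G2_def by (rule tm_summable[OF q d(1) dq K3 xq y])
  define U where "U = (\<lambda>(m::nat, n::nat). a * (1 - q^m) * qpoch (a*q) q (m + n - 1) * qpoch B q m * qpoch B' q n
        / (qpoch q q m * qpoch q q n * qpoch C q (m + n)) * x ^ m * y ^ n)"
  define V where "V = (\<lambda>(m::nat, n::nat). a * q^m * (1 - q^n) * qpoch (a*q) q (m + n - 1) * qpoch B q m * qpoch B' q n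
        / (qpoch q q m * qpoch q q n * qpoch C q (m + n)) * x ^ m * y ^ n)"
  define c1 where "c1 = a*x*(1-B)/(1-C)"
  define c2 where "c2 = a*y*(1-B')/(1-C)"
  have split: "S1 p = S0 p + U p + V p" for p
  proof -
    obtain m n where p: "p = (m, n)" by (cases p)
    have e: "qpoch (a*q) q (m+n) = qpoch a q (m+n) + (a * (1 - q^m) * qpoch (a*q) q (m + n - 1) + a * q^m * (1 - q^n) * qpoch (a*q) q (m + n - 1))"
      using qpoch_aq[of a q "m+n"] by (simp add: algebra_simps power_add)
    show ?thesis unfolding p S1_def S0_def U_def V_def tm_def
      by (simp only: prod.case e distrib_right add_divide_distrib add.assoc)
  qed
  have U0: "U (0, n) = 0" for n by (simp add: U_def)
  have V0: "V (m, 0) = 0" for m by (simp add: V_def)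
  have Ush: "(\<lambda>(m, n). U (Suc m, n)) = (\<lambda>p. c1 * G1 p)"
  proof (rule ext, clarify)
    fix m n :: nat
    have Q: "1 - q * q^m \<noteq> 0" using qpoch_qq_nz[OF q, of "Suc m"] by (auto simp: qpoch_Suc)
    have e1: "Suc m + n = Suc (m + n)" "Suc (m + n) - 1 = m + n" by auto
    show "U (Suc m, n) = c1 * G1 (m, n)"
      unfolding U_def G1_def tm_def c1_def prod.case e1
      unfolding qpoch_Suc_shift[of B] qpoch_Suc_shift[of C] qpoch_Suc[of q q m] power_Suc
      by (rule fld1[OF Q C1 qpoch_qq_nz[OF q] qpoch_qq_nz[OF q] qpoch_nz[OF Cqnz]])
  qed
  have Vsh: "(\<lambda>(m, n). V (m, Suc n)) = (\<lambda>p. c2 * G2 p)"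
  proof (rule ext, clarify)
    fix m n :: nat
    have Q: "1 - q * q^n \<noteq> 0" using qpoch_qq_nz[OF q, of "Suc n"] by (auto simp: qpoch_Suc)
    have e1: "m + Suc n = Suc (m + n)" "Suc (m + n) - 1 = m + n" by auto
    show "V (m, Suc n) = c2 * G2 (m, n)"
      unfolding V_def G2_def tm_def c2_def prod.case e1 power_mult_distrib
      unfolding qpoch_Suc_shift[of B'] qpoch_Suc_shift[of C] qpoch_Suc[of q q n] power_Suc
      by (rule fld2[OF Q C1 qpoch_qq_nz[OF q] qpoch_qq_nz[OF q] qpoch_nz[OF Cqnz]])
  qed
  have sU: "U summable_on UNIV"
    unfolding shift1(2)[of U, OF U0] Ush by (rule summable_on_cmult_right[OF sG1])
  have sV: "V summable_on UNIV"
    unfolding shift2(2)[of V, OF V0] Vsh by (rule summable_on_cmult_right[OF sG2])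
  have iU: "infsum U UNIV = c1 * infsum G1 UNIV"
    unfolding shift1(1)[of U, OF U0] Ush by (rule infsum_cmult_right) (use sG1 in simp)
  have iV: "infsum V UNIV = c2 * infsum G2 UNIV"
    unfolding shift2(1)[of V, OF V0] Vsh by (rule infsum_cmult_right) (use sG2 in simp)
  have S1e: "S1 = (\<lambda>p. (S0 p + U p) + V p)" by (intro ext split)
  have "infsum S1 UNIV = infsum (\<lambda>p. (S0 p + U p) + V p) UNIV"
    by (simp only: S1e)
  also have "\<dots> = infsum (\<lambda>p. S0 p + U p) UNIV + infsum V UNIV"
    by (rule infsum_add[OF summable_on_add[OF sS0 sU] sV])
  also have "infsum (\<lambda>p. S0 p + U p) UNIV = infsum S0 UNIV + infsum U UNIV"
    by (rule infsum_add[OF sS0 sU])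
  finally show ?thesis
    unfolding qAppell1_tm S0_def[symmetric] S1_def[symmetric] G1_def[symmetric] G2_def[symmetric] iU iV c1_def c2_def .
qed

lemma coef2: fixes q a :: complex assumes "q \<noteq> 0"
  shows "q^(l choose 2) * (-(a * q powi (-int n)))^l = q powi (int (l choose 2) - int n * int l) * (-a)^l"
proof -
  have "q powi (int (l choose 2) - int n * int l) = q^(l choose 2) / q^(n*l)"
    using assms by (simp add: power_int_diff flip: of_nat_mult)
  moreover have "(-(a * q powi (-int n)))^l = (-a)^l / q^(n*l)"
  proof -
    have "-(a * q powi (-int n)) = (-a) * inverse (q^n)" by (simp add: power_int_minus)
    then have "(-(a * q powi (-int n)))^l = (-a)^l * inverse ((q^n)^l)"
      by (simp only: power_mult_distrib power_inverse)
    then show ?thesis by (simp add: power_mult divide_inverse)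
  qed
  ultimately show ?thesis by simp
qed

lemma delta_exists:
  fixes q c :: complex
  assumes q: "norm q < 1" and c: "\<And>j::nat. c * q ^ j \<noteq> 1"
  shows "\<exists>d>0. \<forall>j. d \<le> norm (1 - c * q^j)"
proof -
  have "(\<lambda>j. c * q^j) \<longlonglongrightarrow> 0"
    by (rule tendsto_mult_right_zero) (rule LIMSEQ_power_zero[OF q])
  then obtain J where J: "\<And>j. j \<ge> J \<Longrightarrow> norm (c * q^j - 0) < 1/2"
    using LIMSEQ_D[of "\<lambda>j. c * q^j" 0 "1/2"] by auto
  define S where "S = insert (1/2) ((\<lambda>j. norm (1 - c * q^j)) ` {..<J})"
  define d where "d = Min S"
  have fin: "finite S" "S \<noteq> {}" unfolding S_def by auto
  have pos: "\<forall>s\<in>S. 0 < s" unfolding S_def using c by (auto simp: right_minus_eq)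
  have "d > 0" unfolding d_def using fin pos by simp
  moreover have "d \<le> norm (1 - c * q^j)" for j
  proof (cases "j < J")
    case True
    then have "norm (1 - c * q^j) \<in> S" unfolding S_def by auto
    then show ?thesis unfolding d_def using fin by simp
  next
    case False
    then have "norm (c * q^j) < 1/2" using J[of j] by simp
    moreover have "1 - norm (c * q^j) \<le> norm (1 - c * q^j)"
      by (metis norm_one norm_triangle_ineq2)
    moreover have "d \<le> 1/2" unfolding d_def by (rule Min_le[OF fin(1)]) (simp add: S_def)
    ultimately show ?thesis by linarith
  qed
  ultimately show ?thesis by blast
qed

lemma norm_q_pow: fixes q z :: complex assumes "norm q < 1" shows "norm (z * q^k) \<le> norm z"
proof -
  have "norm q ^ k \<le> 1" by (rule power_le_one) (use assms in auto)
  then have "norm z * norm q ^ k \<le> norm z" by (simp add: mult_left_le)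
  then show ?thesis by (simp add: norm_mult norm_power)
qed

lemma fld4:
  fixes D u P P' X Y F0 F1 F2 al x y Qj vb vb' :: complex
  assumes "D \<noteq> 0" "u \<noteq> 0"
  shows "P * P' / D * X * Y * (F0 + al * (x * Qj) * vb / u * F1 + al * y * vb' / u * F2)
     = P * P' / D * X * Y * F0 + al * (Qj * (P * vb * P' / (D * u) * (x * X) * Y * F1) + P * (P' * vb') / (D * u) * X * (y * Y) * F2)"
  using assms by (simp add: field_simps)

lemma S_rec:
  fixes q a0 b b' c x y \<alpha> :: complex
  assumes q: "norm q < 1" and d: "0 < d" "\<And>j. d \<le> norm (1 - c * q^j)"
    and K: "Kb q d a0 b b' \<le> K" and x: "norm x * K < 1" and y: "norm y * K < 1"
    and al: "norm \<alpha> \<le> norm a0"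
  defines "S \<equiv> (\<lambda>\<alpha> i j. qpoch b q i * qpoch b' q j / qpoch c q (i+j) * x^i * y^j
              * qAppell1 q \<alpha> (b*q^i) (b'*q^j) (c*q^(i+j)) (x*q^j) y)"
  shows "S (\<alpha>*q) i j = S \<alpha> i j + \<alpha> * Zop q (S (\<alpha>*q)) i j"
proof -
  have K0: "0 \<le> K"
    using K q d unfolding Kb_def by (smt (verit) divide_nonneg_pos mult_pos_pos norm_ge_zero mult_nonneg_nonneg)
  have dC: "d \<le> norm (1 - c * q^(i+j) * q^l)" for l
    using d(2)[of "i+j+l"] by (simp add: power_add mult.assoc)
  have KC: "Kb q d \<alpha> (b*q^i) (b'*q^j) \<le> K"
    by (rule order_trans[OF Kb_mono[OF q d(1) al norm_q_pow[OF q] norm_q_pow[OF q]] K])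
  have xj: "norm (x*q^j) * K < 1"
    using mult_right_mono[OF norm_q_pow[OF q, of x j] K0] x by simp
  have Cnz: "c * q^l \<noteq> 1" for l using d(1) d(2)[of l] by auto
  have Cij: "qpoch c q (i+j) \<noteq> 0" by (rule qpoch_nz[OF Cnz])
  have u: "1 - c * q^(i+j) \<noteq> 0" using Cnz[of "i+j"] by simp
  have R: "qAppell1 q (\<alpha>*q) (b*q^i) (b'*q^j) (c*q^(i+j)) (x*q^j) y
     = qAppell1 q \<alpha> (b*q^i) (b'*q^j) (c*q^(i+j)) (x*q^j) y
       + \<alpha>*(x*q^j)*(1 - b*q^i)/(1 - c*q^(i+j)) * qAppell1 q (\<alpha>*q) (b*q^(Suc i)) (b'*q^j) (c*q^(Suc (i+j))) (x*q^j) y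
       + \<alpha>*y*(1 - b'*q^j)/(1 - c*q^(i+j)) * qAppell1 q (\<alpha>*q) (b*q^i) (b'*q^(Suc j)) (c*q^(Suc (i+j))) (x*q^(Suc j)) y"
    using qA_rec[OF q d(1) dC KC xj y] by (simp only: power_Suc2 mult.assoc)
  have e: "Suc i + j = Suc (i+j)" "i + Suc j = Suc (i+j)" by simp_all
  show ?thesis
    unfolding S_def Zop_def R e qpoch_Suc[of b q i] qpoch_Suc[of b' q j] qpoch_Suc[of c q "i+j"]
      power_Suc[of x i] power_Suc[of y j]
    by (rule fld4[OF Cij u])
qed

lemma core:
  fixes q a b b' c x y :: complex and n :: nat
  assumes q: "norm q < 1" and q0: "q \<noteq> 0" and d: "0 < d" "\<And>j. d \<le> norm (1 - c * q^j)"
    and K: "Kb q d (a * q powi (- int n)) b b' \<le> K" and x: "norm x * K < 1" and y: "norm y * K < 1"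
  shows "qAppell1 q (a * q ^ n) b b' c x y =
           (\<Sum>k\<le>n. \<Sum>i\<le>k. qbinom q n k * qbinom q k i
              * (qpoch b q (k - i) * qpoch b' q i / qpoch c q k)
              * q ^ (2 * (k choose 2)) * a ^ k * x ^ (k - i) * y ^ i
              * qAppell1 q (a * q ^ k) (b * q ^ (k - i)) (b' * q ^ i) (c * q ^ k) (x * q ^ i) y)"
    and "qAppell1 q (a * q powi (- int n)) b b' c x y =
           (\<Sum>k\<le>n. \<Sum>i\<le>k. qbinom q n k * qbinom q k i
              * (qpoch b q (k - i) * qpoch b' q i / qpoch c q k)
              * q powi (int (k choose 2) - int n * int k) * (- a) ^ k * x ^ (k - i) * y ^ i
              * qAppell1 q a (b * q ^ (k - i)) (b' * q ^ i) (c * q ^ k) (x * q ^ i) y)"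
proof -
  define a0 where "a0 = a * q powi (- int n)"
  have a_eq: "a0 * q^n = a" unfolding a0_def power_int_minus power_int_of_nat using q0 by (simp add: field_simps)
  have na: "norm a \<le> norm a0" using norm_q_pow[OF q, of a0 n] a_eq by simp
  define S where "S \<equiv> (\<lambda>\<alpha> i j. qpoch b q i * qpoch b' q j / qpoch c q (i+j) * x^i * y^j
              * qAppell1 q \<alpha> (b*q^i) (b'*q^j) (c*q^(i+j)) (x*q^j) y)"
  have Srec: "S (\<alpha>*q) i j = S \<alpha> i j + \<alpha> * Zop q (S (\<alpha>*q)) i j" if "norm \<alpha> \<le> norm a0" for \<alpha> i j
    unfolding S_def by (rule S_rec[OF q d K[folded a0_def] x y that])
  have S00: "S \<alpha> 0 0 = qAppell1 q \<alpha> b b' c x y" for \<alpha> by (simp add: S_def)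
  have Sk: "S \<alpha> (k - i) i = qpoch b q (k - i) * qpoch b' q i / qpoch c q k * x^(k-i) * y^i
              * qAppell1 q \<alpha> (b*q^(k-i)) (b'*q^i) (c*q^k) (x*q^i) y" if "i \<le> k" for \<alpha> k i
    unfolding S_def using that by simp
  define R1 where "R1 k = S (a * q^k)" for k
  have rec1: "R1 (Suc k) i j = R1 k i j + a * q^k * Zop q (R1 (Suc k)) i j" for k i j
  proof -
    have nrm: "norm (a * q^k) \<le> norm a0" using norm_q_pow[OF q, of a k] na by simp
    have e: "a * q^(Suc k) = a * q^k * q" by (simp add: mult_ac)
    show ?thesis unfolding R1_def e by (rule Srec[OF nrm])
  qed
  have "qAppell1 q (a * q ^ n) b b' c x y = R1 n 0 0" unfolding R1_def S00 ..
  also have "\<dots> = (\<Sum>k\<le>n. gb q n k * (q^(2*(k choose 2)) * a^k) * Zp q k (R1 k) 0 0)"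
    by (rule abs1[OF q rec1])
  also have "\<dots> = (\<Sum>k\<le>n. \<Sum>i\<le>k. qbinom q n k * qbinom q k i
              * (qpoch b q (k - i) * qpoch b' q i / qpoch c q k)
              * q ^ (2 * (k choose 2)) * a ^ k * x ^ (k - i) * y ^ i
              * qAppell1 q (a * q ^ k) (b * q ^ (k - i)) (b' * q ^ i) (c * q ^ k) (x * q ^ i) y)"
  proof (rule sum.cong[OF refl])
    fix k assume "k \<in> {..n}"
    then have kn: "k \<le> n" by simp
    show "gb q n k * (q^(2*(k choose 2)) * a^k) * Zp q k (R1 k) 0 0 = (\<Sum>i\<le>k. qbinom q n k * qbinom q k i
              * (qpoch b q (k - i) * qpoch b' q i / qpoch c q k)
              * q ^ (2 * (k choose 2)) * a ^ k * x ^ (k - i) * y ^ i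
              * qAppell1 q (a * q ^ k) (b * q ^ (k - i)) (b' * q ^ i) (c * q ^ k) (x * q ^ i) y)"
      unfolding Zp_explicit[OF q] sum_distrib_left
    proof (rule sum.cong[OF refl])
      fix i assume "i \<in> {..k}"
      then have ik: "i \<le> k" by simp
      show "gb q n k * (q^(2*(k choose 2)) * a^k) * (gb q k i * q^(0*(k-i)) * R1 k (0 + (k-i)) (0 + i)) =
          qbinom q n k * qbinom q k i
              * (qpoch b q (k - i) * qpoch b' q i / qpoch c q k)
              * q ^ (2 * (k choose 2)) * a ^ k * x ^ (k - i) * y ^ i
              * qAppell1 q (a * q ^ k) (b * q ^ (k - i)) (b' * q ^ i) (c * q ^ k) (x * q ^ i) y"
        unfolding R1_def using Sk[OF ik, of "a * q^k"] kn ik by (simp add: gb_def mult_ac)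
    qed
  qed
  finally show "qAppell1 q (a * q ^ n) b b' c x y =
           (\<Sum>k\<le>n. \<Sum>i\<le>k. qbinom q n k * qbinom q k i
              * (qpoch b q (k - i) * qpoch b' q i / qpoch c q k)
              * q ^ (2 * (k choose 2)) * a ^ k * x ^ (k - i) * y ^ i
              * qAppell1 q (a * q ^ k) (b * q ^ (k - i)) (b' * q ^ i) (c * q ^ k) (x * q ^ i) y)" .
  define R2 where "R2 k = S (a0 * q^k)" for k
  have rec2: "R2 (Suc k) i j = R2 k i j + a0 * q^k * Zop q (R2 (Suc k)) i j" for k i j
  proof -
    have nrm: "norm (a0 * q^k) \<le> norm a0" using norm_q_pow[OF q, of a0 k] by simp
    have e: "a0 * q^(Suc k) = a0 * q^k * q" by (simp add: mult_ac)
    show ?thesis unfolding R2_def e by (rule Srec[OF nrm])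
  qed
  have "qAppell1 q (a * q powi (- int n)) b b' c x y = R2 0 0 0" unfolding R2_def S00 a0_def by simp
  also have "\<dots> = (\<Sum>k\<le>n. gb q n k * (q^(k choose 2) * (-a0)^k) * Zp q k (R2 n) 0 0)"
    by (rule abs2[OF q rec2])
  also have "\<dots> = (\<Sum>k\<le>n. \<Sum>i\<le>k. qbinom q n k * qbinom q k i
              * (qpoch b q (k - i) * qpoch b' q i / qpoch c q k)
              * q powi (int (k choose 2) - int n * int k) * (- a) ^ k * x ^ (k - i) * y ^ i
              * qAppell1 q a (b * q ^ (k - i)) (b' * q ^ i) (c * q ^ k) (x * q ^ i) y)"
  proof (rule sum.cong[OF refl])
    fix k assume "k \<in> {..n}"
    then have kn: "k \<le> n" by simp
    have cf: "q^(k choose 2) * (-a0)^k = q powi (int (k choose 2) - int n * int k) * (-a)^k"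
      unfolding a0_def by (rule coef2[OF q0])
    show "gb q n k * (q^(k choose 2) * (-a0)^k) * Zp q k (R2 n) 0 0 = (\<Sum>i\<le>k. qbinom q n k * qbinom q k i
              * (qpoch b q (k - i) * qpoch b' q i / qpoch c q k)
              * q powi (int (k choose 2) - int n * int k) * (- a) ^ k * x ^ (k - i) * y ^ i
              * qAppell1 q a (b * q ^ (k - i)) (b' * q ^ i) (c * q ^ k) (x * q ^ i) y)"
      unfolding Zp_explicit[OF q] sum_distrib_left cf
    proof (rule sum.cong[OF refl])
      fix i assume "i \<in> {..k}"
      then have ik: "i \<le> k" by simp
      show "gb q n k * (q powi (int (k choose 2) - int n * int k) * (-a)^k) * (gb q k i * q^(0*(k-i)) * R2 n (0 + (k-i)) (0 + i)) =
          qbinom q n k * qbinom q k i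
              * (qpoch b q (k - i) * qpoch b' q i / qpoch c q k)
              * q powi (int (k choose 2) - int n * int k) * (- a) ^ k * x ^ (k - i) * y ^ i
              * qAppell1 q a (b * q ^ (k - i)) (b' * q ^ i) (c * q ^ k) (x * q ^ i) y"
        unfolding R2_def a_eq using Sk[OF ik, of a] kn ik by (simp add: gb_def mult_ac)
    qed
  qed
  finally show "qAppell1 q (a * q powi (- int n)) b b' c x y =
           (\<Sum>k\<le>n. \<Sum>i\<le>k. qbinom q n k * qbinom q k i
              * (qpoch b q (k - i) * qpoch b' q i / qpoch c q k)
              * q powi (int (k choose 2) - int n * int k) * (- a) ^ k * x ^ (k - i) * y ^ i
              * qAppell1 q a (b * q ^ (k - i)) (b' * q ^ i) (c * q ^ k) (x * q ^ i) y)" .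
qed

theorem theorem2:
  fixes q a b b' c :: complex and n :: nat
  assumes "0 < norm q" and "norm q < 1"
    and "\<And>j::nat. c * q ^ j \<noteq> 1"
  shows "eventually (\<lambda>(x, y).
           qAppell1 q (a * q ^ n) b b' c x y =
           (\<Sum>k\<le>n. \<Sum>i\<le>k. qbinom q n k * qbinom q k i
              * (qpoch b q (k - i) * qpoch b' q i / qpoch c q k)
              * q ^ (2 * (k choose 2)) * a ^ k * x ^ (k - i) * y ^ i
              * qAppell1 q (a * q ^ k) (b * q ^ (k - i)) (b' * q ^ i) (c * q ^ k) (x * q ^ i) y))
         (nhds (0, 0))
     \<and> eventually (\<lambda>(x, y).
           qAppell1 q (a * q powi (- int n)) b b' c x y =
           (\<Sum>k\<le>n. \<Sum>i\<le>k. qbinom q n k * qbinom q k i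
              * (qpoch b q (k - i) * qpoch b' q i / qpoch c q k)
              * q powi (int (k choose 2) - int n * int k) * (- a) ^ k * x ^ (k - i) * y ^ i
              * qAppell1 q a (b * q ^ (k - i)) (b' * q ^ i) (c * q ^ k) (x * q ^ i) y))
         (nhds (0, 0))"
proof -
  have q: "norm q < 1" and q0: "q \<noteq> 0" using assms(1,2) by auto
  obtain d where d: "0 < d" "\<And>j. d \<le> norm (1 - c * q^j)"
    using delta_exists[OF q assms(3)] by blast
  define K where "K = Kb q d (a * q powi (- int n)) b b'"
  have K0: "0 \<le> K"
    unfolding K_def Kb_def using q d by (intro divide_nonneg_pos mult_nonneg_nonneg mult_pos_pos) auto
  define e where "e = 1 / (K + 1)"
  have e0: "0 < e" unfolding e_def using K0 by simp
  have small: "norm z * K < 1" if "norm z < e" for z :: complex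
  proof -
    have "norm z * K \<le> e * K" using that K0 by (intro mult_right_mono) auto
    also have "e * K < 1" unfolding e_def using K0 by (simp add: field_simps)
    finally show ?thesis .
  qed
  have bnd: "norm x < e \<and> norm y < e" if "dist (x, y) (0::complex, 0::complex) < e" for x y :: complex
    using that norm_fst_le[of x y] norm_snd_le[of y x] by (auto simp: dist_norm)
  have KK: "Kb q d (a * q powi (- int n)) b b' \<le> K" unfolding K_def ..
  show ?thesis
  proof (rule conjI; subst eventually_nhds_metric; rule exI[of _ e]; intro conjI allI impI e0; clarify)
    fix x y :: complex assume "dist (x, y) (0, 0) < e"
    with bnd have "norm x < e" "norm y < e" by auto
    then show "qAppell1 q (a * q ^ n) b b' c x y =
           (\<Sum>k\<le>n. \<Sum>i\<le>k. qbinom q n k * qbinom q k i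
              * (qpoch b q (k - i) * qpoch b' q i / qpoch c q k)
              * q ^ (2 * (k choose 2)) * a ^ k * x ^ (k - i) * y ^ i
              * qAppell1 q (a * q ^ k) (b * q ^ (k - i)) (b' * q ^ i) (c * q ^ k) (x * q ^ i) y)"
      using core(1)[OF q q0 d KK small small] by blast
  next
    fix x y :: complex assume "dist (x, y) (0, 0) < e"
    with bnd have "norm x < e" "norm y < e" by auto
    then show "qAppell1 q (a * q powi (- int n)) b b' c x y =
           (\<Sum>k\<le>n. \<Sum>i\<le>k. qbinom q n k * qbinom q k i
              * (qpoch b q (k - i) * qpoch b' q i / qpoch c q k)
              * q powi (int (k choose 2) - int n * int k) * (- a) ^ k * x ^ (k - i) * y ^ i
              * qAppell1 q a (b * q ^ (k - i)) (b' * q ^ i) (c * q ^ k) (x * q ^ i) y)"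
      using core(2)[OF q q0 d KK small small] by blast
  qed
qed

end
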